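(* Let $M$ be a smooth manifold and $D\subset TM$ a smooth distribution. Let $\mu:[a,b]\to M$ be an absolutely continuous curve. If $\mu$ admits a reparameterization which is horizontal, then $\mu$ is horizontal.
   Context: A curve $\gamma:[c,d]\to M$ is a reparameterization of $\mu:[a,b]\to M$ if there is an absolutely continuous, nondecreasing, surjective map $\sigma:[c,d]\to[a,b]$ with $\gamma=\mu\circ\sigma$. A curve is horizontal if it is absolutely continuous and its derivative lies in $D$ almost everywhere. *)

theory Defs
  imports "HOL-Analysis.Analysis"
begin

fun Ck_on :: "nat \<Rightarrow> ('a::real_normed_vector \<Rightarrow> 'b::real_normed_vector) \<Rightarrow> 'a set \<Rightarrow> bool" where
  "Ck_on 0 f U = continuous_on U f"
| "Ck_on (Suc k) f U =
     (\<exists>f'. (\<forall>x\<in>U. (f has_derivative f' x) (at x)) \<and> (\<forall>v. Ck_on k (\<lambda>x. f' x v) U))"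

definition smooth_on :: "('a::real_normed_vector \<Rightarrow> 'b::real_normed_vector) \<Rightarrow> 'a set \<Rightarrow> bool" where
  "smooth_on f U \<longleftrightarrow> (\<forall>k. Ck_on k f U)"

text \<open>The manifold is the whole type 'm (Hausdorff, second countable), modelled on the
  Euclidean space 'e; a chart is a pair (domain U, coordinate map phi).\<close>
type_synonym ('m, 'e) chart = "'m set \<times> ('m \<Rightarrow> 'e)"

definition is_chart :: "('m::topological_space, 'e::euclidean_space) chart \<Rightarrow> bool" where
  "is_chart c \<longleftrightarrow> open (fst c) \<and> open (snd c ` fst c) \<and>
     homeomorphism (fst c) (snd c ` fst c) (snd c) (inv_into (fst c) (snd c))"

definition transition :: "('m, 'e) chart \<Rightarrow> ('m, 'e) chart \<Rightarrow> 'e \<Rightarrow> 'e" where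
  "transition c1 c2 = snd c2 \<circ> inv_into (fst c1) (snd c1)"

definition smooth_atlas :: "('m::topological_space, 'e::euclidean_space) chart set \<Rightarrow> bool" where
  "smooth_atlas A \<longleftrightarrow> (\<forall>c\<in>A. is_chart c) \<and> (\<Union>c\<in>A. fst c) = UNIV \<and>
     (\<forall>c1\<in>A. \<forall>c2\<in>A. smooth_on (transition c1 c2) (snd c1 ` (fst c1 \<inter> fst c2)))"

text \<open>D c p is the fibre D_p written in the coordinates of chart c (a subspace of 'e).\<close>
definition smooth_distribution ::
  "('m::topological_space, 'e::euclidean_space) chart set \<Rightarrow> (('m, 'e) chart \<Rightarrow> 'm \<Rightarrow> 'e set) \<Rightarrow> bool" where
  "smooth_distribution A D \<longleftrightarrow>
     (\<forall>c\<in>A. \<forall>p\<in>fst c. subspace (D c p)) \<and>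
     (\<exists>k. \<forall>c\<in>A. \<forall>p\<in>fst c. dim (D c p) = k) \<and>
     (\<forall>c1\<in>A. \<forall>c2\<in>A. \<forall>p\<in>fst c1 \<inter> fst c2.
         D c2 p = frechet_derivative (transition c1 c2) (at (snd c1 p)) ` D c1 p) \<and>
     (\<forall>c\<in>A. \<forall>p\<in>fst c. \<exists>W. open W \<and> p \<in> W \<and> W \<subseteq> fst c \<and>
         (\<exists>F :: ('e \<Rightarrow> 'e) set. finite F \<and> (\<forall>X\<in>F. smooth_on X (snd c ` W)) \<and>
            (\<forall>q\<in>W. D c q = span ((\<lambda>X. X (snd c q)) ` F))))"

definition absolutely_continuous_on :: "real set \<Rightarrow> (real \<Rightarrow> 'a::real_normed_vector) \<Rightarrow> bool" where
  "absolutely_continuous_on S f \<longleftrightarrow>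
     (\<forall>e>0. \<exists>d>0. \<forall>I :: (real \<times> real) set.
        finite I \<and> (\<forall>(u, v)\<in>I. u < v \<and> {u..v} \<subseteq> S) \<and>
        (\<forall>i\<in>I. \<forall>j\<in>I. i \<noteq> j \<longrightarrow> {fst i<..<snd i} \<inter> {fst j<..<snd j} = {}) \<and>
        (\<Sum>(u, v)\<in>I. v - u) < d
        \<longrightarrow> (\<Sum>(u, v)\<in>I. norm (f v - f u)) < e)"

definition ac_curve :: "('m::topological_space, 'e::euclidean_space) chart set \<Rightarrow> (real \<Rightarrow> 'm) \<Rightarrow> real \<Rightarrow> real \<Rightarrow> bool" where
  "ac_curve A \<gamma> a b \<longleftrightarrow> continuous_on {a..b} \<gamma> \<and>
     (\<forall>c\<in>A. \<forall>s t. a \<le> s \<and> s \<le> t \<and> t \<le> b \<and> \<gamma> ` {s..t} \<subseteq> fst c \<longrightarrow>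
        absolutely_continuous_on {s..t} (snd c \<circ> \<gamma>))"

definition horizontal ::
  "('m::topological_space, 'e::euclidean_space) chart set \<Rightarrow> (('m, 'e) chart \<Rightarrow> 'm \<Rightarrow> 'e set) \<Rightarrow>
   (real \<Rightarrow> 'm) \<Rightarrow> real \<Rightarrow> real \<Rightarrow> bool" where
  "horizontal A D \<gamma> a b \<longleftrightarrow> ac_curve A \<gamma> a b \<and>
     (AE t in lebesgue. t \<in> {a..b} \<longrightarrow>
        (\<forall>c\<in>A. \<gamma> t \<in> fst c \<longrightarrow>
           (\<exists>v. ((snd c \<circ> \<gamma>) has_vector_derivative v) (at t within {a..b}) \<and> v \<in> D c (\<gamma> t))))"

definition reparameterization :: "(real \<Rightarrow> 'm) \<Rightarrow> real \<Rightarrow> real \<Rightarrow> (real \<Rightarrow> 'm) \<Rightarrow> real \<Rightarrow> real \<Rightarrow> bool" where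
  "reparameterization \<gamma> c d \<mu> a b \<longleftrightarrow>
     (\<exists>\<sigma>. absolutely_continuous_on {c..d} \<sigma> \<and> mono_on {c..d} \<sigma> \<and> \<sigma> ` {c..d} = {a..b} \<and>
          (\<forall>t\<in>{c..d}. \<gamma> t = \<mu> (\<sigma> t)))"

end

theory Submission
  imports Defs
begin


lemma ball_real_eq: "ball (x::real) r = {x-r<..<x+r}" by (auto simp: dist_real_def)

lemma vitali_intervals:
  fixes E U :: "real set"
  assumes "open U" "E \<subseteq> U"
    and cov: "\<And>t \<delta>. t \<in> E \<Longrightarrow> \<delta> > 0 \<Longrightarrow> \<exists>x r. 0 < r \<and> r < \<delta> \<and> \<bar>t - x\<bar> < r \<and> P x r"
  obtains C where "countable C" "\<And>x r. (x,r) \<in> C \<Longrightarrow> 0 < r \<and> ball x r \<subseteq> U \<and> P x r"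
    "disjoint_family_on (\<lambda>i. ball (fst i) (snd i)) C"
    "negligible (E - (\<Union>i\<in>C. ball (fst i) (snd i)))"
proof -
  let ?K = "{(x,r). 0 < r \<and> ball x r \<subseteq> U \<and> P x r}"
  have *: "\<exists>i. i \<in> ?K \<and> t \<in> ball (fst i) (snd i) \<and> snd i < d" if "t \<in> E" "0 < d" for t d
  proof -
    have "t \<in> U" using assms(2) that(1) by (rule subsetD)
    then obtain e where e: "e > 0" "ball t e \<subseteq> U"
      using open_contains_ball[THEN iffD1, OF assms(1)] by (elim ballE) auto
    have "min d (e/2) > 0" using e(1) that(2) by simp
    then have "\<exists>x r. 0 < r \<and> r < min d (e/2) \<and> \<bar>t - x\<bar> < r \<and> P x r"
      by (rule cov[OF that(1)])
    then obtain x r where xr: "0 < r" "r < min d (e/2)" "\<bar>t - x\<bar> < r" "P x r"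
      by blast
    have "ball x r \<subseteq> ball t e"
    proof
      fix y assume "y \<in> ball x r"
      then have "\<bar>x - y\<bar> < r" by (simp add: dist_real_def)
      then have "\<bar>t - y\<bar> < e" using xr(2,3) by linarith
      then show "y \<in> ball t e" by (simp add: dist_real_def)
    qed
    then have "ball x r \<subseteq> U" using e(2) by (rule order_trans)
    moreover have "t \<in> ball x r" using xr(3) by (simp add: dist_real_def abs_minus_commute)
    ultimately have "(x,r) \<in> ?K \<and> t \<in> ball (fst (x,r)) (snd (x,r)) \<and> snd (x,r) < d"
      using xr by simp
    then show ?thesis by blast
  qed
  obtain C where C: "countable C" "C \<subseteq> ?K"
     "pairwise (\<lambda>i j. disjnt (ball (fst i) (snd i)) (ball (fst j) (snd j))) C"
     "negligible(E - (\<Union>i \<in> C. ball (fst i) (snd i)))"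
    by (rule Vitali_covering_theorem_balls[of E ?K fst snd, OF *])
  show ?thesis
  proof (rule that[OF C(1) _ _ C(4)])
    show "\<And>x r. (x,r) \<in> C \<Longrightarrow> 0 < r \<and> ball x r \<subseteq> U \<and> P x r" using C(2) by auto
    show "disjoint_family_on (\<lambda>i. ball (fst i) (snd i)) C"
      using C(3) unfolding disjoint_family_on_def pairwise_def disjnt_def by blast
  qed
qed

lemma sum_compare:
  fixes M N :: "real measure"
  assumes C: "countable C" and sM: "sets M = sets borel" and sN: "sets N = sets borel"
    and disj: "disjoint_family_on (\<lambda>i. ball (fst i) (snd i)) C"
    and le: "\<And>i. i \<in> C \<Longrightarrow> c1 * emeasure M (ball (fst i) (snd i)) \<le> c2 * emeasure N (ball (fst i) (snd i))"
  shows "c1 * emeasure M (\<Union>i\<in>C. ball (fst i) (snd i)) \<le> c2 * emeasure N (\<Union>i\<in>C. ball (fst i) (snd i))"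
proof -
  let ?B = "\<lambda>i. ball (fst i) (snd i)"
  have "emeasure M (\<Union>i\<in>C. ?B i) = (\<integral>\<^sup>+i. emeasure M (?B i) \<partial>count_space C)"
    by (rule emeasure_UN_countable) (auto simp: sM C disj)
  then have "c1 * emeasure M (\<Union>i\<in>C. ?B i) = (\<integral>\<^sup>+i. c1 * emeasure M (?B i) \<partial>count_space C)"
    by (simp add: nn_integral_cmult)
  also have "\<dots> \<le> (\<integral>\<^sup>+i. c2 * emeasure N (?B i) \<partial>count_space C)"
    by (rule nn_integral_mono) (simp add: le)
  also have "\<dots> = c2 * (\<integral>\<^sup>+i. emeasure N (?B i) \<partial>count_space C)"
    by (rule nn_integral_cmult) simp
  also have "(\<integral>\<^sup>+i. emeasure N (?B i) \<partial>count_space C) = emeasure N (\<Union>i\<in>C. ?B i)"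
    by (rule emeasure_UN_countable[symmetric]) (auto simp: sN C disj)
  finally show ?thesis .
qed

lemma nu_Ioo:
  fixes F :: "real \<Rightarrow> real"
  assumes mono: "mono F" and cont: "continuous_on UNIV F" and ab: "a \<le> b"
  shows "emeasure (interval_measure F) {a<..<b} = ennreal (F b - F a)"
proof (cases "a = b")
  case True then show ?thesis by simp
next
  case False
  then have ab': "a < b" using ab by simp
  have m: "\<And>x y. x \<le> y \<Longrightarrow> F x \<le> F y" using mono by (simp add: mono_def)
  have rc: "\<And>a. continuous (at_right a) F"
    using cont by (simp add: continuous_on_eq_continuous_at continuous_at_imp_continuous_at_within)
  have "emeasure (interval_measure F) {a<..b} = F b - F a"
    by (rule emeasure_interval_measure_Ioc[OF ab m rc])
  moreover have "emeasure (interval_measure F) {b} = 0"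
    using emeasure_interval_measure_Icc[of b b F, OF order_refl m cont] by simp
  moreover have "{a<..b} = {a<..<b} \<union> {b}" using ab' by auto
  moreover have "emeasure (interval_measure F) ({a<..<b} \<union> {b}) =
      emeasure (interval_measure F) {a<..<b} + emeasure (interval_measure F) {b}"
    by (rule plus_emeasure[symmetric]) auto
  ultimately show ?thesis by simp
qed

lemma nu_ball:
  fixes F :: "real \<Rightarrow> real"
  assumes "mono F" "continuous_on UNIV F" "0 \<le> r"
  shows "emeasure (interval_measure F) (ball x r) = ennreal (F (x+r) - F (x-r))"
  using nu_Ioo[OF assms(1,2), of "x-r" "x+r"] assms(3) by (simp add: ball_real_eq)

lemma lborel_ball:
  fixes x r :: real
  assumes "0 \<le> r"
  shows "emeasure lborel (ball x r) = ennreal (2*r)"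
  using assms by (simp add: ball_real_eq emeasure_lborel_Ioo)



definition lowP :: "(real \<Rightarrow> real) \<Rightarrow> real \<Rightarrow> real \<Rightarrow> bool" where
  "lowP F p t \<longleftrightarrow> (\<forall>\<delta>>0. \<exists>x r. 0 < r \<and> r < \<delta> \<and> \<bar>t - x\<bar> < r \<and> F (x+r) - F (x-r) < p*(2*r))"

definition highP :: "(real \<Rightarrow> real) \<Rightarrow> real \<Rightarrow> real \<Rightarrow> bool" where
  "highP F q t \<longleftrightarrow> (\<forall>\<delta>>0. \<exists>x r. 0 < r \<and> r < \<delta> \<and> \<bar>t - x\<bar> < r \<and> F (x+r) - F (x-r) > q*(2*r))"

lemma leb_borel: "A \<in> sets borel \<Longrightarrow> emeasure lebesgue A = emeasure lborel A"
  by simp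

lemma om_zero_negligible:
  assumes "outer_measure_of lebesgue E = 0"
  shows "negligible E"
proof -
  obtain H where H: "H \<in> sets lebesgue" "E \<subseteq> H" "outer_measure_of lebesgue E = emeasure lebesgue H"
    using outer_measure_of_attain[of E lebesgue] by auto
  then have "H \<in> null_sets lebesgue" using assms by auto
  then have "negligible H" by (simp add: negligible_iff_null_sets)
  then show ?thesis using H(2) by (rule negligible_subset)
qed

lemma om_le_cover:
  assumes "E \<subseteq> W \<union> N" "W \<in> sets lebesgue" "negligible N"
  shows "outer_measure_of lebesgue E \<le> emeasure lebesgue W"
proof -
  have N: "N \<in> null_sets lebesgue" using assms(3) by (simp add: negligible_iff_null_sets)
  have "outer_measure_of lebesgue E \<le> outer_measure_of lebesgue (W \<union> N)"
    by (rule outer_measure_of_mono[OF assms(1)])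
  also have "\<dots> = emeasure lebesgue (W \<union> N)"
    using assms(2) N by (intro outer_measure_of_eq) auto
  also have "\<dots> = emeasure lebesgue W"
    by (rule emeasure_Un_null_set[OF assms(2) N])
  finally show ?thesis .
qed

lemma open_balls_union: "open (\<Union>i\<in>C. ball (fst i) (snd i))"
  by (intro open_UN) auto

lemma high_cover:
  fixes F :: "real \<Rightarrow> real"
  assumes mono: "mono F" and cont: "continuous_on UNIV F" and U: "open U" "E \<subseteq> U" and q: "0 \<le> q"
    and hi: "\<And>t. t \<in> E \<Longrightarrow> highP F q t"
  shows "ennreal q * outer_measure_of lebesgue E \<le> emeasure (interval_measure F) U"
proof -
  obtain C where C: "countable C" "\<And>x r. (x,r) \<in> C \<Longrightarrow> 0 < r \<and> ball x r \<subseteq> U \<and> F (x+r) - F (x-r) > q*(2*r)"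
    "disjoint_family_on (\<lambda>i. ball (fst i) (snd i)) C"
    "negligible (E - (\<Union>i\<in>C. ball (fst i) (snd i)))"
  proof (rule vitali_intervals[OF U])
    show "\<exists>x r. 0 < r \<and> r < \<delta> \<and> \<bar>t - x\<bar> < r \<and> F (x+r) - F (x-r) > q*(2*r)"
      if "t \<in> E" "\<delta> > 0" for t \<delta>
      using hi[OF that(1)] that(2) unfolding highP_def by blast
  qed auto
  define W where "W = (\<Union>i\<in>C. ball (fst i) (snd i))"
  have Wo: "open W" unfolding W_def by (rule open_balls_union)
  have WU: "W \<subseteq> U" unfolding W_def using C(2) by fastforce
  have "outer_measure_of lebesgue E \<le> emeasure lebesgue W"
    by (rule om_le_cover[of E W "E - W"]) (use C(4) Wo in \<open>auto simp: W_def\<close>)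
  also have "\<dots> = emeasure lborel W" using Wo by simp
  finally have 1: "ennreal q * outer_measure_of lebesgue E \<le> ennreal q * emeasure lborel W"
    by (rule mult_left_mono) simp
  have 2: "ennreal q * emeasure lborel W \<le> 1 * emeasure (interval_measure F) W"
    unfolding W_def
  proof (rule sum_compare[OF C(1) _ _ C(3)])
    fix i assume "i \<in> C"
    then obtain x r where i: "i = (x,r)" and xr: "0 < r" "F (x+r) - F (x-r) > q*(2*r)"
      using C(2) by (cases i) auto
    have "ennreal q * emeasure lborel (ball x r) = ennreal (q*(2*r))"
      using xr q by (simp add: lborel_ball ennreal_mult)
    also have "\<dots> \<le> ennreal (F (x+r) - F (x-r))"
      using xr by (intro ennreal_leI) simp
    also have "\<dots> = emeasure (interval_measure F) (ball x r)"
      using xr by (simp add: nu_ball[OF mono cont])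
    finally show "ennreal q * emeasure lborel (ball (fst i) (snd i)) \<le> 1 * emeasure (interval_measure F) (ball (fst i) (snd i))"
      using i by simp
  qed auto
  have 3: "emeasure (interval_measure F) W \<le> emeasure (interval_measure F) U"
    using WU U(1) by (intro emeasure_mono) auto
  show ?thesis using 1 2 3 by simp
qed

lemma low_cover:
  fixes F :: "real \<Rightarrow> real"
  assumes mono: "mono F" and cont: "continuous_on UNIV F" and U: "open U" "E \<subseteq> U" and p: "0 \<le> p"
    and lo: "\<And>t. t \<in> E \<Longrightarrow> lowP F p t"
  obtains V where "open V" "V \<subseteq> U" "negligible (E - V)"
    "emeasure (interval_measure F) V \<le> ennreal p * emeasure lborel U"
proof -
  obtain C where C: "countable C" "\<And>x r. (x,r) \<in> C \<Longrightarrow> 0 < r \<and> ball x r \<subseteq> U \<and> F (x+r) - F (x-r) < p*(2*r)"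
    "disjoint_family_on (\<lambda>i. ball (fst i) (snd i)) C"
    "negligible (E - (\<Union>i\<in>C. ball (fst i) (snd i)))"
  proof (rule vitali_intervals[OF U])
    show "\<exists>x r. 0 < r \<and> r < \<delta> \<and> \<bar>t - x\<bar> < r \<and> F (x+r) - F (x-r) < p*(2*r)"
      if "t \<in> E" "\<delta> > 0" for t \<delta>
      using lo[OF that(1)] that(2) unfolding lowP_def by blast
  qed auto
  define W where "W = (\<Union>i\<in>C. ball (fst i) (snd i))"
  have Wo: "open W" unfolding W_def by (rule open_balls_union)
  have WU: "W \<subseteq> U" unfolding W_def using C(2) by fastforce
  have 2: "1 * emeasure (interval_measure F) W \<le> ennreal p * emeasure lborel W"
    unfolding W_def
  proof (rule sum_compare[OF C(1) _ _ C(3)])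
    fix i assume "i \<in> C"
    then obtain x r where i: "i = (x,r)" and xr: "0 < r" "F (x+r) - F (x-r) < p*(2*r)"
      using C(2) by (cases i) auto
    have "emeasure (interval_measure F) (ball x r) = ennreal (F (x+r) - F (x-r))"
      using xr by (simp add: nu_ball[OF mono cont])
    also have "\<dots> \<le> ennreal (p*(2*r))"
      using xr by (intro ennreal_leI) simp
    also have "\<dots> = ennreal p * emeasure lborel (ball x r)"
      using xr p by (simp add: lborel_ball ennreal_mult)
    finally show "1 * emeasure (interval_measure F) (ball (fst i) (snd i)) \<le> ennreal p * emeasure lborel (ball (fst i) (snd i))"
      using i by simp
  qed auto
  have 3: "emeasure lborel W \<le> emeasure lborel U"
    using WU U(1) by (intro emeasure_mono) auto
  have "emeasure (interval_measure F) W \<le> ennreal p * emeasure lborel U"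
    using 2 mult_left_mono[OF 3, of "ennreal p"] by simp
  then show ?thesis using that[OF Wo WU] C(4) unfolding W_def by blast
qed



lemma om_ball_finite:
  assumes "E \<subseteq> ball (z::real) R"
  shows "outer_measure_of lebesgue E < \<infinity>"
proof -
  have "outer_measure_of lebesgue E \<le> outer_measure_of lebesgue (ball z R)"
    by (rule outer_measure_of_mono[OF assms])
  also have "\<dots> = emeasure lborel (ball z R)"
    by (subst outer_measure_of_eq) auto
  also have "\<dots> < \<infinity>" by (rule emeasure_lborel_ball_finite)
  finally show ?thesis .
qed

lemma Epq_negligible:
  fixes F :: "real \<Rightarrow> real"
  assumes mono: "mono F" and cont: "continuous_on UNIV F" and pq: "0 \<le> p" "p < q"
    and Eb: "E \<subseteq> ball z R" and E: "\<And>t. t \<in> E \<Longrightarrow> lowP F p t \<and> highP F q t"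
  shows "negligible E"
proof -
  let ?m = "outer_measure_of lebesgue E"
  have key: "ennreal q * ?m \<le> ennreal p * (?m + ennreal \<epsilon>)" if epos0: "\<epsilon> > 0" for \<epsilon>
  proof -
    obtain H where H: "H \<in> sets lebesgue" "E \<subseteq> H" "?m = emeasure lebesgue H"
      using outer_measure_of_attain[of E lebesgue] by auto
    define H' where "H' = H \<inter> ball z R"
    have H'm: "H' \<in> sets lebesgue" using H(1) unfolding H'_def by auto
    have EH': "E \<subseteq> H'" using H(2) Eb unfolding H'_def by auto
    have "emeasure lebesgue H' \<le> ?m" unfolding H(3) H'_def using H(1) by (intro emeasure_mono) auto
    moreover have "?m \<le> emeasure lebesgue H'"
      using outer_measure_of_mono[OF EH', of lebesgue] H'm by simp
    ultimately have H'eq: "emeasure lebesgue H' = ?m" by simp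
    obtain T where T: "open T" "H' \<subseteq> T" "(T - H') \<in> lmeasurable" "emeasure lebesgue (T - H') < ennreal \<epsilon>"
      using sets_lebesgue_outer_open[OF H'm epos0] by blast
    define U where "U = T \<inter> ball z R"
    have Uo: "open U" unfolding U_def using T(1) by auto
    have EU: "E \<subseteq> U" unfolding U_def using EH' T(2) Eb by auto
    have "emeasure lborel U = emeasure lebesgue U" using Uo by simp
    also have "\<dots> \<le> emeasure lebesgue (H' \<union> (T - H'))"
    proof (rule emeasure_mono)
      show "U \<subseteq> H' \<union> (T - H')" unfolding U_def by blast
      show "H' \<union> (T - H') \<in> sets lebesgue" by (intro sets.Un H'm fmeasurableD[OF T(3)])
    qed
    also have "\<dots> \<le> emeasure lebesgue H' + emeasure lebesgue (T - H')"
      using H'm fmeasurableD[OF T(3)] by (rule emeasure_subadditive)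
    also have "\<dots> \<le> ?m + ennreal \<epsilon>" using H'eq T(4) by (intro add_mono) auto
    finally have Um: "emeasure lborel U \<le> ?m + ennreal \<epsilon>" .
    obtain V where V: "open V" "V \<subseteq> U" "negligible (E - V)"
      "emeasure (interval_measure F) V \<le> ennreal p * emeasure lborel U"
      using low_cover[OF mono cont Uo EU pq(1)] E by blast
    have hi: "ennreal q * outer_measure_of lebesgue (E \<inter> V) \<le> emeasure (interval_measure F) V"
      using high_cover[OF mono cont V(1), of "E \<inter> V" q] E pq by auto
    obtain H2 where H2: "H2 \<in> sets lebesgue" "E \<inter> V \<subseteq> H2" "outer_measure_of lebesgue (E \<inter> V) = emeasure lebesgue H2"
      using outer_measure_of_attain[of "E \<inter> V" lebesgue] by auto
    have "?m \<le> emeasure lebesgue H2"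
      by (rule om_le_cover[of E H2 "E - V"]) (use H2 V(3) in auto)
    then have "ennreal q * ?m \<le> ennreal q * outer_measure_of lebesgue (E \<inter> V)"
      using H2(3) by (intro mult_left_mono) auto
    also have "\<dots> \<le> ennreal p * emeasure lborel U" using hi V(4) by simp
    also have "\<dots> \<le> ennreal p * (?m + ennreal \<epsilon>)" using Um by (intro mult_left_mono) auto
    finally show ?thesis .
  qed
  have "?m < \<infinity>" by (rule om_ball_finite[OF Eb])
  then obtain m where m: "?m = ennreal m" "0 \<le> m"
    by (cases ?m) auto
  have "m = 0"
  proof (rule ccontr)
    assume "m \<noteq> 0"
    then have mpos: "m > 0" using m(2) by simp
    define \<epsilon> where "\<epsilon> = (q - p) * m / (2 * (p + 1))"
    have epos: "\<epsilon> > 0" unfolding \<epsilon>_def using pq mpos by (intro divide_pos_pos mult_pos_pos) auto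
    have e1: "ennreal q * ?m = ennreal (q*m)" using m pq by (simp add: ennreal_mult)
    have e2: "ennreal p * (?m + ennreal \<epsilon>) = ennreal (p*(m+\<epsilon>))" using m pq epos by (simp add: ennreal_mult)
    have "ennreal (q * m) \<le> ennreal (p * (m + \<epsilon>))"
      using key[OF epos] unfolding e1 e2 .
    then have le: "q * m \<le> p * (m + \<epsilon>)"
      using pq epos m(2) by (subst (asm) ennreal_le_iff) auto
    have "p * \<epsilon> = (q - p) * m * (p / (2 * (p + 1)))" unfolding \<epsilon>_def using pq by (simp add: field_simps)
    also have "\<dots> < (q - p) * m * 1"
      using pq mpos by (intro mult_strict_left_mono) (auto simp: field_simps)
    finally have "p * \<epsilon> < (q - p) * m" by simp
    then show False using le by (simp add: algebra_simps)
  qed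
  then have "?m = 0" using m by simp
  then show ?thesis by (rule om_zero_negligible)
qed

lemma Einf_negligible:
  fixes F :: "real \<Rightarrow> real"
  assumes mono: "mono F" and cont: "continuous_on UNIV F"
    and Eb: "E \<subseteq> ball z R" and E: "\<And>t M. t \<in> E \<Longrightarrow> highP F M t"
  shows "negligible E"
proof (cases "R \<le> 0")
  case True
  then have "E = {}" using Eb ball_empty by blast
  then show ?thesis by simp
next
  case False
  let ?m = "outer_measure_of lebesgue E"
  let ?K = "F (z+R) - F (z-R)"
  have K: "emeasure (interval_measure F) (ball z R) = ennreal ?K"
    using False by (intro nu_ball[OF mono cont]) auto
  have "?m < \<infinity>" by (rule om_ball_finite[OF Eb])
  then obtain m where m: "?m = ennreal m" "0 \<le> m"
    by (cases ?m) auto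
  have key: "real n * m \<le> ?K" for n :: nat
  proof -
    have "ennreal (real n) * ?m \<le> ennreal ?K"
      using high_cover[OF mono cont _ Eb, of "real n"] E K by auto
    then have "ennreal (real n * m) \<le> ennreal ?K" using m by (simp add: ennreal_mult)
    moreover have "0 \<le> ?K" using mono False by (auto simp: mono_def)
    ultimately show ?thesis using m(2) by (subst (asm) ennreal_le_iff) auto
  qed
  have "m = 0"
  proof (rule ccontr)
    assume "m \<noteq> 0"
    then have mpos: "m > 0" using m(2) by simp
    obtain n :: nat where "n > ?K / m" using reals_Archimedean2 by blast
    then have "real n * m > ?K" using mpos by (simp add: field_simps)
    then show False using key[of n] by simp
  qed
  then have "?m = 0" using m by simp
  then show ?thesis by (rule om_zero_negligible)
qed



lemma closed_straddle_bound:
  fixes F :: "real \<Rightarrow> real"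
  assumes cont: "continuous_on UNIV F"
    and strad: "\<And>x r. 0 < r \<Longrightarrow> r < \<delta> \<Longrightarrow> \<bar>t - x\<bar> < r \<Longrightarrow> \<bar>(F (x+r) - F (x-r))/(2*r) - L\<bar> \<le> \<epsilon>"
    and uv: "u \<le> t" "t \<le> v" "u < v" "v - u < 2*\<delta>"
  shows "\<bar>(F v - F u)/(v - u) - L\<bar> \<le> \<epsilon>"
proof -
  let ?g = "\<lambda>\<eta>. (F (v+\<eta>) - F (u-\<eta>)) / (v - u + 2*\<eta>)"
  have c: "isCont F y" for y using cont by (simp add: continuous_on_eq_continuous_at)
  have l1: "((\<lambda>\<eta>. F (v+\<eta>)) \<longlongrightarrow> F v) (at_right 0)"
  proof -
    have "((\<lambda>\<eta>::real. v+\<eta>) \<longlongrightarrow> v) (at_right 0)"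
      using tendsto_add[OF tendsto_const[of v] tendsto_ident_at[of 0 "{0<..}"]] by simp
    then show ?thesis by (rule isCont_tendsto_compose[OF c])
  qed
  have l2: "((\<lambda>\<eta>. F (u-\<eta>)) \<longlongrightarrow> F u) (at_right 0)"
  proof -
    have "((\<lambda>\<eta>::real. u-\<eta>) \<longlongrightarrow> u) (at_right 0)"
      using tendsto_diff[OF tendsto_const[of u] tendsto_ident_at[of 0 "{0<..}"]] by simp
    then show ?thesis by (rule isCont_tendsto_compose[OF c])
  qed
  have l3: "((\<lambda>\<eta>::real. v - u + 2*\<eta>) \<longlongrightarrow> v - u) (at_right 0)"
    using tendsto_add[OF tendsto_const[of "v-u"] tendsto_mult[OF tendsto_const[of 2] tendsto_ident_at[of 0 "{0<..}"]]] by simp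
  have lim: "(?g \<longlongrightarrow> (F v - F u)/(v - u)) (at_right 0)"
    by (rule tendsto_divide[OF tendsto_diff[OF l1 l2] l3]) (use uv in simp)
  have pos: "\<delta> - (v-u)/2 > 0" using uv by simp
  have ev: "eventually (\<lambda>\<eta>. \<bar>?g \<eta> - L\<bar> \<le> \<epsilon>) (at_right 0)"
    unfolding eventually_at_right_field
  proof (intro exI[of _ "\<delta> - (v-u)/2"] conjI allI impI)
    fix \<eta> :: real assume h: "0 < \<eta>" "\<eta> < \<delta> - (v-u)/2"
    define hh where "hh = (v-u)/2"
    have hh: "v = u + 2*hh" unfolding hh_def by (simp add: field_simps)
    have h2: "\<eta> < \<delta> - hh" using h(2) unfolding hh_def .
    define x where "x = u + hh"
    define r where "r = hh+\<eta>"
    have a1: "0 < r" unfolding r_def using h uv hh by linarith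
    have a2: "r < \<delta>" unfolding r_def using h2 by linarith
    have a3: "\<bar>t - x\<bar> < r" unfolding r_def x_def using h uv hh by (simp add: abs_if)
    have e: "x + r = v+\<eta>" "x - r = u-\<eta>" "2*r = v-u+2*\<eta>"
      unfolding x_def r_def using hh by simp_all
    have "\<bar>(F (x+r) - F (x-r))/(2*r) - L\<bar> \<le> \<epsilon>" by (rule strad[OF a1 a2 a3])
    then show "\<bar>?g \<eta> - L\<bar> \<le> \<epsilon>" by (simp only: e)
  qed (use pos in simp)
  have "(F v - F u)/(v - u) \<le> L + \<epsilon>"
    by (rule tendsto_upperbound[OF lim]) (use ev in \<open>auto elim: eventually_mono\<close>)
  moreover have "L - \<epsilon> \<le> (F v - F u)/(v - u)"
    by (rule tendsto_lowerbound[OF lim]) (use ev in \<open>auto elim: eventually_mono\<close>)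
  ultimately show ?thesis by linarith
qed



lemma diff_from_not_bad:
  fixes F :: "real \<Rightarrow> real"
  assumes mono: "mono F" and cont: "continuous_on UNIV F"
    and A: "\<And>p q. p \<in> \<rat> \<Longrightarrow> q \<in> \<rat> \<Longrightarrow> 0 \<le> p \<Longrightarrow> p < q \<Longrightarrow> \<not> (lowP F p t \<and> highP F q t)"
    and B: "\<not> (\<forall>M. highP F M t)"
  shows "\<exists>L. DERIV F t :> L"
proof -
  define S where "S x r = (F (x+r) - F (x-r)) / (2*r)" for x r
  have Snn: "0 \<le> S x r" if "0 < r" for x r
  proof -
    have "F (x-r) \<le> F (x+r)" using mono that by (auto simp: mono_def)
    then show ?thesis unfolding S_def using that by simp
  qed
  obtain M \<delta>0 where \<delta>0: "\<delta>0 > 0" and Mb: "\<And>x r. 0 < r \<Longrightarrow> r < \<delta>0 \<Longrightarrow> \<bar>t-x\<bar> < r \<Longrightarrow> S x r \<le> M"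
  proof -
    from B obtain M where "\<not> highP F M t" by blast
    then obtain \<delta> where d: "\<delta> > 0" "\<forall>x r. 0 < r \<and> r < \<delta> \<and> \<bar>t - x\<bar> < r \<longrightarrow> \<not> (F (x+r) - F (x-r) > M*(2*r))"
      unfolding highP_def by blast
    show thesis
    proof (rule that[OF d(1)])
      fix x r assume xr: "0 < r" "r < \<delta>" "\<bar>t-x\<bar> < r"
      then have "F (x+r) - F (x-r) \<le> M*(2*r)" using d(2) by force
      then show "S x r \<le> M" unfolding S_def using xr by (simp add: pos_divide_le_eq)
    qed
  qed
  have cauchy: "\<exists>\<delta>>0. \<forall>x r x' r'. 0<r \<longrightarrow> r<\<delta> \<longrightarrow> \<bar>t-x\<bar><r \<longrightarrow> 0<r' \<longrightarrow> r'<\<delta> \<longrightarrow> \<bar>t-x'\<bar><r'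
      \<longrightarrow> S x' r' - S x r \<le> \<epsilon>" if epos: "\<epsilon> > 0" for \<epsilon>
  proof -
    obtain \<rho> where \<rho>: "\<rho> \<in> \<rat>" "0 < \<rho>" "\<rho> < \<epsilon>/3" using Rats_dense_in_real[of 0 "\<epsilon>/3"] epos by auto
    define K where "K = nat \<lceil>max M 0 / \<rho>\<rceil> + 1"
    define Q where "Q k \<delta> \<longleftrightarrow> \<delta> > 0 \<and> ((\<forall>x r. 0<r \<longrightarrow> r<\<delta> \<longrightarrow> \<bar>t-x\<bar><r \<longrightarrow> real k * \<rho> \<le> S x r) \<or>
        (\<forall>x r. 0<r \<longrightarrow> r<\<delta> \<longrightarrow> \<bar>t-x\<bar><r \<longrightarrow> S x r \<le> real (Suc k) * \<rho>))" for k \<delta>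
    have ex: "\<exists>\<delta>. Q k \<delta>" for k
    proof -
      have "\<not> (lowP F (real k * \<rho>) t \<and> highP F (real (Suc k) * \<rho>) t)"
        by (rule A) (use \<rho> in \<open>auto intro: Rats_mult simp: distrib_right\<close>)
      then have "\<not> lowP F (real k * \<rho>) t \<or> \<not> highP F (real (Suc k) * \<rho>) t" by blast
      then show ?thesis
      proof
        assume "\<not> lowP F (real k * \<rho>) t"
        then obtain \<delta> where d: "\<delta>>0" "\<forall>x r. 0<r \<and> r<\<delta> \<and> \<bar>t-x\<bar><r \<longrightarrow> \<not> F (x+r) - F (x-r) < real k * \<rho> * (2*r)"
          unfolding lowP_def by blast
        have "real k * \<rho> \<le> S x r" if "0<r" "r<\<delta>" "\<bar>t-x\<bar><r" for x r
        proof -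
          have "real k * \<rho> * (2*r) \<le> F (x+r) - F (x-r)" using d(2) that by force
          then show ?thesis unfolding S_def using that by (simp add: pos_le_divide_eq)
        qed
        then show ?thesis unfolding Q_def using d(1) by blast
      next
        assume "\<not> highP F (real (Suc k) * \<rho>) t"
        then obtain \<delta> where d: "\<delta>>0" "\<forall>x r. 0<r \<and> r<\<delta> \<and> \<bar>t-x\<bar><r \<longrightarrow> \<not> F (x+r) - F (x-r) > real (Suc k) * \<rho> * (2*r)"
          unfolding highP_def by blast
        have "S x r \<le> real (Suc k) * \<rho>" if "0<r" "r<\<delta>" "\<bar>t-x\<bar><r" for x r
        proof -
          have "F (x+r) - F (x-r) \<le> real (Suc k) * \<rho> * (2*r)" using d(2) that by force
          then show ?thesis unfolding S_def using that by (simp add: pos_divide_le_eq)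
        qed
        then show ?thesis unfolding Q_def using d(1) by blast
      qed
    qed
    then have "\<forall>k. \<exists>\<delta>. Q k \<delta>" by blast
    then obtain d where d: "\<forall>k. Q k (d k)" using choice by blast
    define \<delta> where "\<delta> = min \<delta>0 (Min (d ` {..K}))"
    have dpos: "\<forall>k. d k > 0" using d unfolding Q_def by blast
    have \<delta>pos: "\<delta> > 0" unfolding \<delta>_def using \<delta>0 dpos by (auto simp: Min_gr_iff)
    have \<delta>le: "\<delta> \<le> d k" if "k \<le> K" for k unfolding \<delta>_def using that by (auto intro!: min.coboundedI2 Min_le)
    have \<delta>le0: "\<delta> \<le> \<delta>0" unfolding \<delta>_def by simp
    show ?thesis
    proof (intro exI[of _ \<delta>] conjI allI impI)
      show "\<delta> > 0" by (rule \<delta>pos)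
      fix x r x' r' assume xr: "0<r" "r<\<delta>" "\<bar>t-x\<bar><r" "0<r'" "r'<\<delta>" "\<bar>t-x'\<bar><r'"
      show "S x' r' - S x r \<le> \<epsilon>"
      proof (rule ccontr)
        assume "\<not> S x' r' - S x r \<le> \<epsilon>"
        then have gap: "S x r + \<epsilon> < S x' r'" by simp
        have s1: "0 \<le> S x r" using Snn xr(1) .
        have s2: "S x' r' \<le> M" using Mb xr(4,5,6) \<delta>le0 by simp
        define y where "y = S x r / \<rho>"
        have y0: "0 \<le> y" unfolding y_def using s1 \<rho> by simp
        define k where "k = nat \<lfloor>y\<rfloor> + 1"
        have rk: "real k = of_int \<lfloor>y\<rfloor> + 1" unfolding k_def using y0 by simp
        have "y < real k" using rk real_of_int_floor_add_one_gt[of y] by linarith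
        then have k1: "S x r < real k * \<rho>" unfolding y_def using \<rho>(2) by (simp add: divide_less_eq)
        have "real k \<le> y + 1" using rk of_int_floor_le[of y] by linarith
        then have "real k * \<rho> \<le> S x r + \<rho>" unfolding y_def using \<rho>(2) by (simp add: field_simps)
        then have k2: "real (Suc k) * \<rho> < S x' r'" using gap \<rho> by (simp add: distrib_right)
        have "y \<le> max M 0 / \<rho>" unfolding y_def using gap s2 \<rho>(2) epos by (intro divide_right_mono) auto
        then have "\<lfloor>y\<rfloor> \<le> \<lceil>max M 0 / \<rho>\<rceil>" by (meson floor_le_ceiling floor_mono order_trans)
        then have kK: "k \<le> K" unfolding k_def K_def by (simp add: nat_mono)
        have "Q k (d k)" using d by blast
        then show False unfolding Q_def
        proof (elim conjE disjE)
          assume "\<forall>x r. 0<r \<longrightarrow> r<d k \<longrightarrow> \<bar>t-x\<bar><r \<longrightarrow> real k * \<rho> \<le> S x r"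
          then have "real k * \<rho> \<le> S x r" using xr(1,2,3) \<delta>le[OF kK] by simp
          then show False using k1 by simp
        next
          assume "\<forall>x r. 0<r \<longrightarrow> r<d k \<longrightarrow> \<bar>t-x\<bar><r \<longrightarrow> S x r \<le> real (Suc k) * \<rho>"
          then have "S x' r' \<le> real (Suc k) * \<rho>" using xr(4,5,6) \<delta>le[OF kK] by simp
          then show False using k2 by simp
        qed
      qed
    qed
  qed
  define a where "a n = S t (1 / real (Suc n))" for n
  have ainv: "\<exists>N. \<forall>n\<ge>N. 1 / real (Suc n) < \<delta>" if dpos': "\<delta> > 0" for \<delta>
  proof -
    obtain N where N: "inverse (real (Suc N)) < \<delta>" using reals_Archimedean[OF dpos'] by blast
    have "1 / real (Suc n) < \<delta>" if "n \<ge> N" for n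
    proof -
      have "1 / real (Suc n) \<le> 1 / real (Suc N)" using that by (simp add: frac_le)
      then show ?thesis using N by (simp add: inverse_eq_divide)
    qed
    then show ?thesis by blast
  qed
  have "Cauchy a"
    unfolding Cauchy_def
  proof (intro allI impI)
    fix e :: real assume e: "e > 0"
    obtain \<delta> where \<delta>: "\<delta> > 0" "\<forall>x r x' r'. 0<r \<longrightarrow> r<\<delta> \<longrightarrow> \<bar>t-x\<bar><r \<longrightarrow> 0<r' \<longrightarrow> r'<\<delta> \<longrightarrow> \<bar>t-x'\<bar><r'
      \<longrightarrow> S x' r' - S x r \<le> e/2" using cauchy[of "e/2"] e by auto
    obtain N where N: "\<forall>n\<ge>N. 1 / real (Suc n) < \<delta>" using ainv[OF \<delta>(1)] by blast
    show "\<exists>M. \<forall>m\<ge>M. \<forall>n\<ge>M. dist (a m) (a n) < e"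
    proof (intro exI[of _ N] allI impI)
      fix m n assume mn: "m \<ge> N" "n \<ge> N"
      have "a m - a n \<le> e/2" "a n - a m \<le> e/2"
        unfolding a_def using \<delta>(2) N mn by auto
      then show "dist (a m) (a n) < e" using e by (simp add: dist_real_def abs_if)
    qed
  qed
  then obtain L where L: "a \<longlonglongrightarrow> L" using Cauchy_convergent_iff convergent_def by blast
  have bound: "\<exists>\<delta>>0. \<forall>x r. 0<r \<longrightarrow> r<\<delta> \<longrightarrow> \<bar>t-x\<bar><r \<longrightarrow> \<bar>S x r - L\<bar> \<le> \<epsilon>" if epos: "\<epsilon>>0" for \<epsilon>
  proof -
    obtain \<delta> where \<delta>: "\<delta> > 0" "\<forall>x r x' r'. 0<r \<longrightarrow> r<\<delta> \<longrightarrow> \<bar>t-x\<bar><r \<longrightarrow> 0<r' \<longrightarrow> r'<\<delta> \<longrightarrow> \<bar>t-x'\<bar><r'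
      \<longrightarrow> S x' r' - S x r \<le> \<epsilon>" using cauchy[OF epos] by auto
    obtain N where N: "\<forall>n\<ge>N. 1 / real (Suc n) < \<delta>" using ainv[OF \<delta>(1)] by blast
    show ?thesis
    proof (intro exI[of _ \<delta>] conjI allI impI)
      fix x r assume xr: "0<r" "r<\<delta>" "\<bar>t-x\<bar><r"
      have b1: "\<forall>n\<ge>N. a n - S x r \<le> \<epsilon>" "\<forall>n\<ge>N. -\<epsilon> \<le> a n - S x r"
      proof (safe)
        fix n assume n: "n \<ge> N"
        have p: "0 < 1 / real (Suc n)" "1 / real (Suc n) < \<delta>" "\<bar>t - t\<bar> < 1 / real (Suc n)"
          using N n by auto
        show "a n - S x r \<le> \<epsilon>" unfolding a_def using \<delta>(2)[rule_format, OF xr p] .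
        have "S x r - a n \<le> \<epsilon>" unfolding a_def using \<delta>(2)[rule_format, OF p xr] .
        then show "-\<epsilon> \<le> a n - S x r" by simp
      qed
      have lim: "(\<lambda>n. a n - S x r) \<longlonglongrightarrow> L - S x r" using L by (intro tendsto_intros)
      have "L - S x r \<le> \<epsilon>" by (rule LIMSEQ_le_const2[OF lim]) (use b1 in blast)
      moreover have "-\<epsilon> \<le> L - S x r" by (rule LIMSEQ_le_const[OF lim]) (use b1 in blast)
      ultimately show "\<bar>S x r - L\<bar> \<le> \<epsilon>" by simp
    qed (rule \<delta>(1))
  qed
  have "DERIV F t :> L"
    unfolding DERIV_def LIM_eq
  proof (intro allI impI)
    fix \<epsilon> :: real assume epos: "\<epsilon> > 0"
    obtain \<delta> where \<delta>: "\<delta> > 0" "\<forall>x r. 0<r \<longrightarrow> r<\<delta> \<longrightarrow> \<bar>t-x\<bar><r \<longrightarrow> \<bar>S x r - L\<bar> \<le> \<epsilon>/2"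
      using bound[of "\<epsilon>/2"] epos by auto
    have strad: "\<And>x r. 0 < r \<Longrightarrow> r < \<delta> \<Longrightarrow> \<bar>t - x\<bar> < r \<Longrightarrow> \<bar>(F (x+r) - F (x-r))/(2*r) - L\<bar> \<le> \<epsilon>/2"
      using \<delta>(2) unfolding S_def by blast
    show "\<exists>s>0. \<forall>h. h \<noteq> 0 \<and> norm (h - 0) < s \<longrightarrow> norm ((F (t + h) - F t) / h - L) < \<epsilon>"
    proof (intro exI[of _ "2*\<delta>"] conjI allI impI)
      show "2*\<delta> > 0" using \<delta>(1) by simp
      fix h :: real assume h: "h \<noteq> 0 \<and> norm (h - 0) < 2*\<delta>"
      have "\<bar>(F (t + h) - F t) / h - L\<bar> \<le> \<epsilon>/2"
      proof (cases "h > 0")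
        case True
        have "\<bar>(F (t+h) - F t)/((t+h) - t) - L\<bar> \<le> \<epsilon>/2"
          by (rule closed_straddle_bound[OF cont strad]) (use True h in auto)
        then show ?thesis by simp
      next
        case False
        then have hn: "h < 0" using h by simp
        have "\<bar>(F t - F (t+h))/(t - (t+h)) - L\<bar> \<le> \<epsilon>/2"
          by (rule closed_straddle_bound[OF cont strad]) (use hn h in auto)
        moreover have "(F t - F (t+h))/(t - (t+h)) = (F (t + h) - F t) / h"
          using hn by (simp add: field_simps)
        ultimately show ?thesis by simp
      qed
      then show "norm ((F (t + h) - F t) / h - L) < \<epsilon>" using epos by simp
    qed
  qed
  then show ?thesis by blast
qed



lemma Icc_sets_lebesgue: "{a..b::real} \<in> sets lebesgue"
  by (metis cbox_interval fmeasurableD lmeasurable_cbox)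

lemma lusin_N:
  fixes \<sigma> :: "real \<Rightarrow> real"
  assumes ac: "absolutely_continuous_on {c..d} \<sigma>" and mono: "mono_on {c..d} \<sigma>"
    and A: "A \<subseteq> {c..d}" "negligible A"
  shows "negligible (\<sigma> ` A)"
proof (cases "c < d")
  case False
  then have "A \<subseteq> {c}" using A(1) by auto
  then have "finite (\<sigma> ` A)" by (meson finite.emptyI finite_imageI finite_insert finite_subset)
  then show ?thesis by blast
next
  case cd: True
  show ?thesis
    unfolding negligible_outer_le
  proof (intro allI impI)
    fix e :: real assume e: "e > 0"
    obtain \<delta> where \<delta>: "\<delta> > 0" and acd: "\<And>I :: (real \<times> real) set.
        finite I \<and> (\<forall>(u, v)\<in>I. u < v \<and> {u..v} \<subseteq> {c..d}) \<and>
        (\<forall>i\<in>I. \<forall>j\<in>I. i \<noteq> j \<longrightarrow> {fst i<..<snd i} \<inter> {fst j<..<snd j} = {}) \<and>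
        (\<Sum>(u, v)\<in>I. v - u) < \<delta>
        \<Longrightarrow> (\<Sum>(u, v)\<in>I. norm (\<sigma> v - \<sigma> u)) < e"
      using ac e unfolding absolutely_continuous_on_def by meson
    have Am: "A \<in> lmeasurable" "measure lebesgue A = 0" using A(2) negligible_iff_measure by auto
    have Acb: "A \<subseteq> cbox c d" using A(1) by (simp add: cbox_interval)
    have hd: "\<delta>/2 > 0" using \<delta> by simp
    obtain \<D> where D: "countable \<D>"
        "\<And>K. K \<in> \<D> \<Longrightarrow> K \<subseteq> cbox c d \<and> K \<noteq> {} \<and> (\<exists>c d. K = cbox c d)"
        "pairwise (\<lambda>A B. interior A \<inter> interior B = {}) \<D>"
        "\<And>K. \<lbrakk>K \<in> \<D>; box c d \<noteq> {}\<rbrakk> \<Longrightarrow> interior K \<noteq> {}"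
        "A \<subseteq> \<Union>\<D>" "\<Union>\<D> \<in> lmeasurable" "measure lebesgue (\<Union>\<D>) \<le> measure lebesgue A + \<delta>/2"
      using measurable_outer_intervals_bounded[OF Am(1) Acb hd] by metis
    have Kform0: "K = {Inf K..Sup K} \<and> Inf K < Sup K \<and> c \<le> Inf K \<and> Sup K \<le> d" if K: "K \<in> \<D>" for K
    proof -
      obtain u v where uv: "K = {u..v}" using D(2)[OF K] by (auto simp: cbox_interval)
      have "interior K \<noteq> {}" using D(4)[OF K] cd by (simp add: box_real)
      then have "u < v" using uv by auto
      moreover have "{u..v} \<subseteq> {c..d}" using D(2)[OF K] uv by (simp add: cbox_interval)
      ultimately show ?thesis using uv by auto
    qed
    have Keq: "K = {Inf K..Sup K}" if "K \<in> \<D>" for K using Kform0[OF that] by blast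
    have Kprop: "Inf K < Sup K" "c \<le> Inf K" "Sup K \<le> d" if "K \<in> \<D>" for K using Kform0[OF that] by blast+
    have Kmem: "t \<in> K \<longleftrightarrow> Inf K \<le> t \<and> t \<le> Sup K" if "K \<in> \<D>" for K t
    proof -
      have "t \<in> {Inf K..Sup K} \<longleftrightarrow> Inf K \<le> t \<and> t \<le> Sup K" by simp
      then show ?thesis using Keq[OF that] by metis
    qed
    have Kint: "interior K = {Inf K<..<Sup K}" if "K \<in> \<D>" for K
      using Keq[OF that] interior_atLeastAtMost_real by metis
    have Ksets: "K \<in> sets lebesgue" if "K \<in> \<D>" for K
      using Keq[OF that] Icc_sets_lebesgue by metis
    have Kmeas: "measure lebesgue K = Sup K - Inf K" if "K \<in> \<D>" for K
    proof -
      have "measure lebesgue {Inf K..Sup K} = Sup K - Inf K" using Kprop(1)[OF that] by simp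
      then show ?thesis using Keq[OF that] by metis
    qed
    define g where "g K = {\<sigma> (Inf K)..\<sigma> (Sup K)}" for K :: "real set"
    define T where "T = (\<Union>K\<in>\<D>. g K)"
    have sub: "\<sigma> ` A \<subseteq> T"
    proof
      fix y assume "y \<in> \<sigma> ` A"
      then obtain t where t: "t \<in> A" "y = \<sigma> t" by blast
      then obtain K where K: "K \<in> \<D>" "t \<in> K" using D(5) by blast
      have tb: "Inf K \<le> t" "t \<le> Sup K" using K Kmem by blast+
      note kf = Kprop[OF K(1)]
      have "\<sigma> (Inf K) \<le> \<sigma> t" by (rule mono_onD[OF mono]) (use tb kf in auto)
      moreover have "\<sigma> t \<le> \<sigma> (Sup K)" by (rule mono_onD[OF mono]) (use tb kf in auto)
      ultimately show "y \<in> T" unfolding T_def g_def using K(1) t(2) by auto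
    qed
    have gmeas: "measure lebesgue (g K) = \<sigma> (Sup K) - \<sigma> (Inf K)" if K: "K \<in> \<D>" for K
    proof -
      note kf = Kprop[OF K]
      have "\<sigma> (Inf K) \<le> \<sigma> (Sup K)" by (rule mono_onD[OF mono]) (use kf in auto)
      then show ?thesis unfolding g_def by simp
    qed
    have bound: "measure lebesgue (\<Union>K\<in>\<D>'. g K) \<le> e" if D': "\<D>' \<subseteq> \<D>" "finite \<D>'" for \<D>'
    proof -
      define I where "I = (\<lambda>K. (Inf K, Sup K)) ` \<D>'"
      have inj: "inj_on (\<lambda>K. (Inf K, Sup K)) \<D>'"
      proof (rule inj_onI)
        fix K K' assume KK: "K \<in> \<D>'" "K' \<in> \<D>'" "(Inf K, Sup K) = (Inf K', Sup K')"
        then have KK': "K \<in> \<D>" "K' \<in> \<D>" using D'(1) by auto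
        show "K = K'"
        proof (rule set_eqI)
          fix t show "t \<in> K \<longleftrightarrow> t \<in> K'" using Kmem[OF KK'(1)] Kmem[OF KK'(2)] KK(3) by simp
        qed
      qed
      have finI: "finite I" unfolding I_def using D'(2) by simp
      have I1: "\<forall>(u, v)\<in>I. u < v \<and> {u..v} \<subseteq> {c..d}"
        unfolding I_def using Kprop D'(1) by fastforce
      have I2: "\<forall>i\<in>I. \<forall>j\<in>I. i \<noteq> j \<longrightarrow> {fst i<..<snd i} \<inter> {fst j<..<snd j} = {}"
      proof (intro ballI impI)
        fix i j assume ij: "i \<in> I" "j \<in> I" "i \<noteq> j"
        then obtain K K' where KK: "K \<in> \<D>'" "K' \<in> \<D>'" "i = (Inf K, Sup K)" "j = (Inf K', Sup K')"
          unfolding I_def by blast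
        then have "K \<noteq> K'" using ij(3) by auto
        then have "interior K \<inter> interior K' = {}" using D(3) KK D'(1) by (auto simp: pairwise_def)
        moreover have "interior K = {Inf K<..<Sup K}" "interior K' = {Inf K'<..<Sup K'}"
          using Kint KK(1,2) D'(1) by auto
        ultimately show "{fst i<..<snd i} \<inter> {fst j<..<snd j} = {}" using KK(3,4) by simp
      qed
      have sumI: "(\<Sum>(u, v)\<in>I. v - u) = (\<Sum>K\<in>\<D>'. measure lebesgue K)"
      proof -
        have "(\<Sum>(u, v)\<in>I. v - u) = (\<Sum>K\<in>\<D>'. Sup K - Inf K)"
          unfolding I_def by (subst sum.reindex[OF inj]) simp
        also have "\<dots> = (\<Sum>K\<in>\<D>'. measure lebesgue K)"
          using Kmeas D'(1) by (intro sum.cong) auto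
        finally show ?thesis .
      qed
      have "(\<Sum>K\<in>\<D>'. measure lebesgue K) = measure lebesgue (\<Union>\<D>')"
      proof (rule measure_negligible_finite_Union[symmetric, OF D'(2)])
        show "K \<in> lmeasurable" if "K \<in> \<D>'" for K using D(2) that D'(1) by blast
        show "pairwise (\<lambda>S T. negligible (S \<inter> T)) \<D>'"
          unfolding pairwise_def
        proof (intro ballI impI)
          fix K K' assume KK: "K \<in> \<D>'" "K' \<in> \<D>'" "K \<noteq> K'"
          then have KK': "K \<in> \<D>" "K' \<in> \<D>" using D'(1) by auto
          have disj: "interior K \<inter> interior K' = {}" using D(3) KK D'(1) by (auto simp: pairwise_def)
          have "K \<inter> K' \<subseteq> {Inf K, Sup K, Inf K', Sup K'}"
          proof
            fix x assume x: "x \<in> K \<inter> K'"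
            show "x \<in> {Inf K, Sup K, Inf K', Sup K'}"
            proof (rule ccontr)
              assume nx: "x \<notin> {Inf K, Sup K, Inf K', Sup K'}"
              have "x \<in> {Inf K<..<Sup K}" "x \<in> {Inf K'<..<Sup K'}"
                using x nx Kmem[OF KK'(1)] Kmem[OF KK'(2)] by auto
              then show False using disj Kint[OF KK'(1)] Kint[OF KK'(2)] by auto
            qed
          qed
          then show "negligible (K \<inter> K')" by (rule negligible_subset[rotated]) auto
        qed
      qed
      also have "\<dots> \<le> measure lebesgue (\<Union>\<D>)"
      proof (rule measure_mono_fmeasurable)
        show "\<Union>\<D>' \<subseteq> \<Union>\<D>" using D'(1) by blast
        show "\<Union>\<D> \<in> lmeasurable" by (rule D(6))
        show "\<Union>\<D>' \<in> sets lebesgue"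
          using D'(2) by (rule sets.finite_Union) (use D'(1) Ksets in blast)
      qed
      finally have "(\<Sum>(u, v)\<in>I. v - u) < \<delta>" using sumI D(7) Am(2) \<delta> by simp
      then have lt: "(\<Sum>(u, v)\<in>I. norm (\<sigma> v - \<sigma> u)) < e" using acd finI I1 I2 by blast
      have "(\<Sum>(u, v)\<in>I. norm (\<sigma> v - \<sigma> u)) = (\<Sum>K\<in>\<D>'. norm (\<sigma> (Sup K) - \<sigma> (Inf K)))"
        unfolding I_def by (simp add: sum.reindex[OF inj])
      also have "\<dots> = (\<Sum>K\<in>\<D>'. \<sigma> (Sup K) - \<sigma> (Inf K))"
      proof (rule sum.cong[OF refl])
        fix K assume "K \<in> \<D>'"
        then have kf: "Inf K < Sup K" "c \<le> Inf K" "Sup K \<le> d" using Kprop D'(1) by auto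
        have "\<sigma> (Inf K) \<le> \<sigma> (Sup K)" by (rule mono_onD[OF mono]) (use kf in auto)
        then show "norm (\<sigma> (Sup K) - \<sigma> (Inf K)) = \<sigma> (Sup K) - \<sigma> (Inf K)" by simp
      qed
      finally have eqs: "(\<Sum>(u, v)\<in>I. norm (\<sigma> v - \<sigma> u)) = (\<Sum>K\<in>\<D>'. \<sigma> (Sup K) - \<sigma> (Inf K))" .
      have "measure lebesgue (\<Union>K\<in>\<D>'. g K) \<le> (\<Sum>K\<in>\<D>'. measure lebesgue (g K))"
        by (rule measure_UNION_le) (use D'(2) in \<open>auto simp: g_def\<close>)
      moreover have "(\<Sum>K\<in>\<D>'. measure lebesgue (g K)) = (\<Sum>K\<in>\<D>'. \<sigma> (Sup K) - \<sigma> (Inf K))"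
        using gmeas D'(1) by (intro sum.cong) auto
      ultimately show ?thesis using lt eqs by linarith
    qed
    have "T \<in> lmeasurable" unfolding T_def
      by (rule fmeasurable_UN_bound[OF D(1) _ bound]) (auto simp: g_def)
    moreover have "measure lebesgue T \<le> e" unfolding T_def
      by (rule measure_UN_bound[OF D(1) _ bound]) (auto simp: g_def)
    ultimately show "\<exists>T. \<sigma> ` A \<subseteq> T \<and> T \<in> lmeasurable \<and> measure lebesgue T \<le> e" using sub by blast
  qed
qed



lemma ae_deriv:
  fixes F :: "real \<Rightarrow> real"
  assumes mono: "mono F" and cont: "continuous_on UNIV F"
  shows "negligible {t \<in> ball z R. \<not> (\<exists>L. DERIV F t :> L)}"
proof -
  define E where "E p q = {t \<in> ball z R. 0 \<le> p \<and> p < q \<and> lowP F p t \<and> highP F q t}" for p q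
  define Einf where "Einf = {t \<in> ball z R. \<forall>M. highP F M t}"
  have nE: "negligible (E p q)" for p q
  proof (cases "0 \<le> p \<and> p < q")
    case True
    show ?thesis by (rule Epq_negligible[OF mono cont _ _ _, of p q _ z R]) (use True in \<open>auto simp: E_def\<close>)
  next
    case False then have "E p q = {}" unfolding E_def by auto
    then show ?thesis by simp
  qed
  have n1: "negligible (\<Union>((\<lambda>pq. E (fst pq) (snd pq)) ` (\<rat> \<times> \<rat>)))"
    by (rule negligible_countable_Union) (auto intro: countable_rat nE)
  have n2: "negligible Einf"
    by (rule Einf_negligible[OF mono cont, of _ z R]) (auto simp: Einf_def)
  have "{t \<in> ball z R. \<not> (\<exists>L. DERIV F t :> L)} \<subseteq> \<Union>((\<lambda>pq. E (fst pq) (snd pq)) ` (\<rat> \<times> \<rat>)) \<union> Einf"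
  proof
    fix t assume t: "t \<in> {t \<in> ball z R. \<not> (\<exists>L. DERIV F t :> L)}"
    show "t \<in> \<Union>((\<lambda>pq. E (fst pq) (snd pq)) ` (\<rat> \<times> \<rat>)) \<union> Einf"
    proof (rule ccontr)
      assume nt: "t \<notin> \<Union>((\<lambda>pq. E (fst pq) (snd pq)) ` (\<rat> \<times> \<rat>)) \<union> Einf"
      have A: "\<not> (lowP F p t \<and> highP F q t)" if "p \<in> \<rat>" "q \<in> \<rat>" "0 \<le> p" "p < q" for p q
      proof
        assume "lowP F p t \<and> highP F q t"
        then have "t \<in> E (fst (p,q)) (snd (p,q))" using t that unfolding E_def by auto
        then show False using nt that by blast
      qed
      have B: "\<not> (\<forall>M. highP F M t)" using nt t unfolding Einf_def by blast
      show False using diff_from_not_bad[OF mono cont A B] t by blast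
    qed
  qed
  then show ?thesis using negligible_subset negligible_Un[OF n1 n2] by blast
qed

lemma measure_ball_real: "0 \<le> r \<Longrightarrow> measure lebesgue (ball (x::real) r) = 2*r"
  by (simp add: ball_real_eq)

lemma sard_1d:
  fixes F \<sigma> :: "real \<Rightarrow> real"
  assumes mono: "mono F" and ac: "absolutely_continuous_on {c..d} \<sigma>" and monoS: "mono_on {c..d} \<sigma>"
    and Fs: "\<And>t. t \<in> {c..d} \<Longrightarrow> F t = \<sigma> t"
  shows "negligible (F ` {t \<in> {c<..<d}. DERIV F t :> 0})"
proof (cases "c < d")
  case False
  then show ?thesis by simp
next
  case cd: True
  let ?Z = "{t \<in> {c<..<d}. DERIV F t :> 0}"
  define U where "U = ball ((c+d)/2) ((d-c)/2)"
  have U: "U = {c<..<d}" unfolding U_def ball_real_eq by (simp add: field_simps)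
  show ?thesis
    unfolding negligible_outer_le
  proof (intro allI impI)
    fix e :: real assume e: "e > 0"
    define \<eta> where "\<eta> = e / (2*(d-c))"
    have \<eta>: "\<eta> > 0" unfolding \<eta>_def using e cd by simp
    have cov: "\<exists>x r. 0 < r \<and> r < \<delta> \<and> \<bar>t - x\<bar> < r \<and> F (x+r) - F (x-r) \<le> \<eta>*(2*r)"
      if t: "t \<in> ?Z" "\<delta> > 0" for t \<delta>
    proof -
      have "DERIV F t :> 0" using t by simp
      then obtain s where s: "s > 0" "\<And>h. h \<noteq> 0 \<Longrightarrow> norm (h - 0) < s \<Longrightarrow> norm ((F (t + h) - F t) / h - 0) < \<eta>"
        unfolding DERIV_def LIM_eq using \<eta> by blast
      define r where "r = min (\<delta>/2) (s/2)"
      have r: "0 < r" "r < \<delta>" "r < s" unfolding r_def using s t by auto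
      have "\<bar>(F (t + r) - F t) / r\<bar> < \<eta>" using s(2)[of r] r by simp
      then have 1: "F (t + r) - F t < \<eta> * r" using r by (simp add: abs_less_iff pos_divide_less_eq)
      have "\<bar>(F (t + (-r)) - F t) / (-r)\<bar> < \<eta>" using s(2)[of "-r"] r by simp
      moreover have "(F (t + (-r)) - F t) / (-r) = (F t - F (t - r)) / r" using r by (simp add: field_simps)
      ultimately have "\<bar>(F t - F (t - r)) / r\<bar> < \<eta>" by metis
      then have 2: "F t - F (t - r) < \<eta> * r" using r by (simp add: abs_less_iff pos_divide_less_eq)
      show ?thesis using 1 2 r by (intro exI[of _ t] exI[of _ r]) auto
    qed
    have Uo: "open U" unfolding U_def by simp
    have ZU: "?Z \<subseteq> U" unfolding U by auto
    obtain C where C: "countable C" "\<And>x r. (x,r) \<in> C \<Longrightarrow> 0 < r \<and> ball x r \<subseteq> U \<and> F (x+r) - F (x-r) \<le> \<eta>*(2*r)"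
      "disjoint_family_on (\<lambda>i. ball (fst i) (snd i)) C"
      "negligible (?Z - (\<Union>i\<in>C. ball (fst i) (snd i)))"
      by (rule vitali_intervals[OF Uo ZU, of "\<lambda>x r. F (x+r) - F (x-r) \<le> \<eta>*(2*r)", OF cov]) simp_all
    define W where "W = (\<Union>i\<in>C. ball (fst i) (snd i))"
    define N1 where "N1 = F ` (?Z - W)"
    have "N1 = \<sigma> ` (?Z - W)" unfolding N1_def using Fs by (intro image_cong) auto
    moreover have sZ: "?Z - W \<subseteq> {c..d}" by auto
    moreover have "negligible (?Z - W)" using C(4) unfolding W_def .
    ultimately have nN1: "negligible N1" using lusin_N[OF ac monoS] by simp
    define g where "g i = {F (fst i - snd i)..F (fst i + snd i)}" for i :: "real \<times> real"
    define T1 where "T1 = (\<Union>i\<in>C. g i)"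
    have sub1: "F ` (?Z \<inter> W) \<subseteq> T1"
    proof
      fix y assume "y \<in> F ` (?Z \<inter> W)"
      then obtain t i where ti: "i \<in> C" "t \<in> ball (fst i) (snd i)" "y = F t" unfolding W_def by blast
      then have "fst i - snd i \<le> t" "t \<le> fst i + snd i" by (auto simp: ball_real_eq)
      then have "F (fst i - snd i) \<le> F t" "F t \<le> F (fst i + snd i)" using mono by (auto simp: mono_def)
      then show "y \<in> T1" unfolding T1_def g_def using ti by auto
    qed
    have bound: "measure lebesgue (\<Union>i\<in>C'. g i) \<le> \<eta> * (d - c)" if C': "C' \<subseteq> C" "finite C'" for C'
    proof -
      have "measure lebesgue (\<Union>i\<in>C'. g i) \<le> (\<Sum>i\<in>C'. measure lebesgue (g i))"
        by (rule measure_UNION_le) (use C'(2) in \<open>auto simp: g_def\<close>)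
      also have "\<dots> = (\<Sum>i\<in>C'. F (fst i + snd i) - F (fst i - snd i))"
      proof (rule sum.cong[OF refl])
        fix i assume "i \<in> C'"
        then have "0 < snd i" using C(2) C'(1) by (cases i) auto
        then have "F (fst i - snd i) \<le> F (fst i + snd i)" using mono by (auto simp: mono_def)
        then show "measure lebesgue (g i) = F (fst i + snd i) - F (fst i - snd i)" unfolding g_def by simp
      qed
      also have "\<dots> \<le> (\<Sum>i\<in>C'. \<eta> * measure lebesgue (ball (fst i) (snd i)))"
      proof (rule sum_mono)
        fix i assume "i \<in> C'"
        then have "0 < snd i" "F (fst i + snd i) - F (fst i - snd i) \<le> \<eta>*(2* snd i)"
          using C(2) C'(1) by (cases i, auto)+
        then show "F (fst i + snd i) - F (fst i - snd i) \<le> \<eta> * measure lebesgue (ball (fst i) (snd i))"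
          using measure_ball_real[of "snd i" "fst i"] by simp
      qed
      also have "\<dots> = \<eta> * measure lebesgue (\<Union>i\<in>C'. ball (fst i) (snd i))"
      proof -
        have "measure lebesgue (\<Union>i\<in>C'. ball (fst i) (snd i)) = (\<Sum>i\<in>C'. measure lebesgue (ball (fst i) (snd i)))"
        proof (rule measure_negligible_finite_Union_image[OF C'(2)])
          show "ball (fst i) (snd i) \<in> lmeasurable" if "i \<in> C'" for i by simp
          show "pairwise (\<lambda>i j. negligible (ball (fst i) (snd i) \<inter> ball (fst j) (snd j))) C'"
            unfolding pairwise_def
          proof (intro ballI impI)
            fix i j assume "i \<in> C'" "j \<in> C'" "i \<noteq> j"
            then have "ball (fst i) (snd i) \<inter> ball (fst j) (snd j) = {}"
              using C(3) C'(1) unfolding disjoint_family_on_def by blast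
            then show "negligible (ball (fst i) (snd i) \<inter> ball (fst j) (snd j))" by simp
          qed
        qed
        then show ?thesis by (simp add: sum_distrib_left)
      qed
      also have "\<dots> \<le> \<eta> * measure lebesgue U"
      proof (rule mult_left_mono)
        show "measure lebesgue (\<Union>i\<in>C'. ball (fst i) (snd i)) \<le> measure lebesgue U"
        proof (rule measure_mono_fmeasurable)
          show "(\<Union>i\<in>C'. ball (fst i) (snd i)) \<subseteq> U" using C(2) C'(1) by fastforce
          show "(\<Union>i\<in>C'. ball (fst i) (snd i)) \<in> sets lebesgue" by (intro sets.countable_UN'') (auto intro: countable_finite[OF C'(2)])
          show "U \<in> lmeasurable" unfolding U_def by simp
        qed
      qed (use \<eta> in simp)
      also have "\<dots> = \<eta> * (d - c)" unfolding U_def using cd measure_ball_real[of "(d-c)/2" "(c+d)/2"] by simp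
      finally show ?thesis .
    qed
    have T1m: "T1 \<in> lmeasurable" unfolding T1_def
      by (rule fmeasurable_UN_bound[OF C(1) _ bound]) (auto simp: g_def)
    have T1b: "measure lebesgue T1 \<le> \<eta> * (d - c)" unfolding T1_def
      by (rule measure_UN_bound[OF C(1) _ bound]) (auto simp: g_def)
    have N1m: "N1 \<in> lmeasurable" "measure lebesgue N1 = 0" using nN1 negligible_iff_measure by auto
    show "\<exists>T. F ` ?Z \<subseteq> T \<and> T \<in> lmeasurable \<and> measure lebesgue T \<le> e"
    proof (intro exI[of _ "T1 \<union> N1"] conjI)
      show "F ` ?Z \<subseteq> T1 \<union> N1" using sub1 unfolding N1_def by blast
      show "T1 \<union> N1 \<in> lmeasurable" using T1m N1m by auto
      have "measure lebesgue (T1 \<union> N1) \<le> measure lebesgue T1 + measure lebesgue N1"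
        using T1m N1m by (intro measure_Un_le) auto
      also have "\<dots> \<le> \<eta> * (d - c)" using T1b N1m by simp
      also have "\<dots> = e/2" unfolding \<eta>_def using cd by (simp add: field_simps)
      finally show "measure lebesgue (T1 \<union> N1) \<le> e" using e by simp
    qed
  qed
qed



lemma sub_scale_test: "subspace (S::'a::euclidean_space set) \<Longrightarrow> x \<in> S \<Longrightarrow> c *\<^sub>R x \<in> S"
  by (rule subspace_mul)

lemma ac_continuous:
  fixes f :: "real \<Rightarrow> 'a::real_normed_vector"
  assumes ac: "absolutely_continuous_on {c..d} f"
  shows "continuous_on {c..d} f"
  unfolding continuous_on_iff
proof (intro ballI allI impI)
  fix x e assume x: "x \<in> {c..d}" and e: "(e::real) > 0"
  obtain \<delta> where \<delta>: "\<delta> > 0" and acd: "\<And>I :: (real \<times> real) set.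
        finite I \<and> (\<forall>(u, v)\<in>I. u < v \<and> {u..v} \<subseteq> {c..d}) \<and>
        (\<forall>i\<in>I. \<forall>j\<in>I. i \<noteq> j \<longrightarrow> {fst i<..<snd i} \<inter> {fst j<..<snd j} = {}) \<and>
        (\<Sum>(u, v)\<in>I. v - u) < \<delta>
        \<Longrightarrow> (\<Sum>(u, v)\<in>I. norm (f v - f u)) < e"
    using ac e unfolding absolutely_continuous_on_def by meson
  show "\<exists>d'>0. \<forall>x'\<in>{c..d}. dist x' x < d' \<longrightarrow> dist (f x') (f x) < e"
  proof (intro exI[of _ \<delta>] conjI ballI impI)
    fix x' assume x': "x' \<in> {c..d}" "dist x' x < \<delta>"
    show "dist (f x') (f x) < e"
    proof (cases "x' = x")
      case True then show ?thesis using e by simp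
    next
      case False
      define I where "I = {(min x x', max x x')}"
      have "(\<Sum>(u, v)\<in>I. norm (f v - f u)) < e"
      proof (rule acd, intro conjI)
        show "finite I" unfolding I_def by simp
        show "\<forall>(u, v)\<in>I. u < v \<and> {u..v} \<subseteq> {c..d}" unfolding I_def using False x x' by auto
        show "\<forall>i\<in>I. \<forall>j\<in>I. i \<noteq> j \<longrightarrow> {fst i<..<snd i} \<inter> {fst j<..<snd j} = {}" unfolding I_def by simp
        show "(\<Sum>(u, v)\<in>I. v - u) < \<delta>" unfolding I_def using x'(2) by (auto simp: dist_real_def abs_if max_def min_def)
      qed
      then show ?thesis unfolding I_def by (cases "x \<le> x'") (simp_all add: dist_norm norm_minus_commute)
    qed
  qed (use \<delta> in simp)
qed

lemma strict_around:
  fixes F :: "real \<Rightarrow> real"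
  assumes mono: "mono F" and der: "DERIV F t :> L" and L: "L > 0" and h: "h > 0"
  shows "F (t - h) < F t" "F t < F (t + h)"
proof -
  obtain d1 where d1: "d1 > 0" "\<And>h. h > 0 \<Longrightarrow> h < d1 \<Longrightarrow> F t < F (t + h)"
    using DERIV_pos_inc_right[OF der L] by blast
  obtain d2 where d2: "d2 > 0" "\<And>h. h > 0 \<Longrightarrow> h < d2 \<Longrightarrow> F (t - h) < F t"
    using DERIV_pos_inc_left[OF der L] by blast
  define h1 where "h1 = min h (d1/2)"
  have "F t < F (t + h1)" using d1 h unfolding h1_def by (intro d1(2)) auto
  also have "F (t + h1) \<le> F (t + h)" using mono unfolding h1_def mono_def by simp
  finally show "F t < F (t + h)" .
  define h2 where "h2 = min h (d2/2)"
  have "F (t - h) \<le> F (t - h2)" using mono unfolding h2_def mono_def by simp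
  also have "F (t - h2) < F t" using d2 h unfolding h2_def by (intro d2(2)) auto
  finally show "F (t - h) < F t" .
qed

lemma reparam_deriv:
  fixes F :: "real \<Rightarrow> real" and f g :: "real \<Rightarrow> 'a::real_normed_vector"
  assumes mono: "mono F"
    and surj: "\<And>y. y \<in> {a..b} \<Longrightarrow> \<exists>x\<in>{c..d}. F x = y"
    and Fab: "\<And>x. x \<in> {c..d} \<Longrightarrow> F x \<in> {a..b}"
    and t: "c < t" "t < d" and der: "DERIV F t :> L" and L: "L > 0"
    and fder: "(f has_vector_derivative w) (at t within {c..d})"
    and comp: "\<And>x. x \<in> {c..d} \<Longrightarrow> g (F x) = f x"
  shows "(g has_vector_derivative (1/L) *\<^sub>R w) (at (F t) within {a..b})"
proof -
  define s where "s = F t"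
  define \<tau> where "\<tau> y = (if y = s then t else (SOME x. x \<in> {c..d} \<and> F x = y))" for y
  have \<tau>1: "\<tau> y \<in> {c..d} \<and> F (\<tau> y) = y" if "y \<in> {a..b}" for y
  proof (cases "y = s")
    case True then show ?thesis unfolding \<tau>_def s_def using t by simp
  next
    case False
    have "\<exists>x. x \<in> {c..d} \<and> F x = y" using surj[OF that] by blast
    from someI_ex[OF this] show ?thesis unfolding \<tau>_def using False by simp
  qed
  have \<tau>s: "\<tau> s = t" unfolding \<tau>_def by simp
  have sa: "a < s"
  proof -
    define h where "h = (t - c)/2"
    have h: "h > 0" "t - h \<in> {c..d}" unfolding h_def using t by (auto simp: field_simps)
    have "a \<le> F (t - h)" using Fab[OF h(2)] by simp
    also have "F (t - h) < F t" by (rule strict_around(1)[OF mono der L h(1)])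
    finally show ?thesis unfolding s_def .
  qed
  have sb: "s < b"
  proof -
    define h where "h = (d - t)/2"
    have h: "h > 0" "t + h \<in> {c..d}" unfolding h_def using t by (auto simp: field_simps)
    have "F t < F (t + h)" by (rule strict_around(2)[OF mono der L h(1)])
    also have "F (t + h) \<le> b" using Fab[OF h(2)] by simp
    finally show ?thesis unfolding s_def .
  qed
  have cont: "isCont \<tau> s"
    unfolding isCont_def LIM_eq
  proof (intro allI impI)
    fix \<epsilon> :: real assume e: "\<epsilon> > 0"
    define e' where "e' = min \<epsilon> (min (t - c) (d - t)) / 2"
    have e': "e' > 0" "e' < \<epsilon>" "t - e' \<in> {c..d}" "t + e' \<in> {c..d}" unfolding e'_def using e t by (auto simp: field_simps min_def)
    have lo: "F (t - e') < s" unfolding s_def by (rule strict_around(1)[OF mono der L e'(1)])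
    have hi: "s < F (t + e')" unfolding s_def by (rule strict_around(2)[OF mono der L e'(1)])
    define \<delta> where "\<delta> = min (s - F (t - e')) (F (t + e') - s)"
    have \<delta>: "\<delta> > 0" unfolding \<delta>_def using lo hi by simp
    show "\<exists>\<delta>>0. \<forall>y. y \<noteq> s \<and> norm (y - s) < \<delta> \<longrightarrow> norm (\<tau> y - \<tau> s) < \<epsilon>"
    proof (intro exI[of _ \<delta>] conjI allI impI)
      fix y assume y: "y \<noteq> s \<and> norm (y - s) < \<delta>"
      then have y1: "F (t - e') < y" "y < F (t + e')" unfolding \<delta>_def by auto
      have "a \<le> F (t - e')" using Fab[OF e'(3)] by simp
      moreover have "F (t + e') \<le> b" using Fab[OF e'(4)] by simp
      ultimately have yab: "y \<in> {a..b}" using y1 by auto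
      have ty: "\<tau> y \<in> {c..d}" "F (\<tau> y) = y" using \<tau>1[OF yab] by auto
      have "t - e' < \<tau> y"
      proof (rule ccontr)
        assume "\<not> t - e' < \<tau> y"
        then have "F (\<tau> y) \<le> F (t - e')" using mono by (auto simp: mono_def)
        then show False using ty y1 by simp
      qed
      moreover have "\<tau> y < t + e'"
      proof (rule ccontr)
        assume "\<not> \<tau> y < t + e'"
        then have "F (t + e') \<le> F (\<tau> y)" using mono by (auto simp: mono_def)
        then show False using ty y1 by simp
      qed
      ultimately show "norm (\<tau> y - \<tau> s) < \<epsilon>" using \<tau>s e' by auto
    qed (rule \<delta>)
  qed
  have derF: "DERIV F (\<tau> s) :> L" using der \<tau>s by simp
  have dtau: "DERIV \<tau> s :> inverse L"
    by (rule DERIV_inverse_function[OF derF _ sa sb _ cont]) (use L \<tau>1 in auto)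
  then have dtau': "(\<tau> has_vector_derivative inverse L) (at s within {a..b})"
    by (simp add: has_real_derivative_iff_has_vector_derivative[symmetric] has_field_derivative_at_within)
  have img: "\<tau> ` {a..b} \<subseteq> {c..d}" using \<tau>1 by auto
  have fder': "(f has_vector_derivative w) (at (\<tau> s) within \<tau> ` {a..b})"
    using has_vector_derivative_within_subset[OF fder img] \<tau>s by simp
  have ch: "((f \<circ> \<tau>) has_vector_derivative (inverse L *\<^sub>R w)) (at s within {a..b})"
    by (rule vector_diff_chain_within[OF dtau' fder'])
  have "(g has_vector_derivative (inverse L *\<^sub>R w)) (at s within {a..b})"
  proof (rule has_vector_derivative_transform[OF _ _ ch])
    show "s \<in> {a..b}" using sa sb by simp
    fix y assume "y \<in> {a..b}"
    then show "g y = (f \<circ> \<tau>) y" using \<tau>1 comp by (metis comp_apply)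
  qed
  then show ?thesis unfolding s_def by (simp add: inverse_eq_divide)
qed



theorem lemmaA2:
  fixes A :: "('m::{t2_space, second_countable_topology}, 'e::euclidean_space) chart set"
    and D :: "('m, 'e) chart \<Rightarrow> 'm \<Rightarrow> 'e set"
    and \<mu> :: "real \<Rightarrow> 'm" and a b :: real
  assumes "smooth_atlas A"
    and "smooth_distribution A D"
    and "ac_curve A \<mu> a b"
    and "\<exists>\<gamma> c d. reparameterization \<gamma> c d \<mu> a b \<and> horizontal A D \<gamma> c d"
  shows "horizontal A D \<mu> a b"
proof -
  obtain \<gamma> c d where rep: "reparameterization \<gamma> c d \<mu> a b" and hor: "horizontal A D \<gamma> c d"
    using assms(4) by blast
  obtain \<sigma> where \<sigma>ac: "absolutely_continuous_on {c..d} \<sigma>" and \<sigma>mono: "mono_on {c..d} \<sigma>"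
    and \<sigma>im: "\<sigma> ` {c..d} = {a..b}" and \<gamma>\<sigma>: "\<forall>t\<in>{c..d}. \<gamma> t = \<mu> (\<sigma> t)"
    using rep unfolding reparameterization_def by blast
  define goodg where "goodg t \<longleftrightarrow> (\<forall>ch\<in>A. \<gamma> t \<in> fst ch \<longrightarrow>
      (\<exists>v. ((snd ch \<circ> \<gamma>) has_vector_derivative v) (at t within {c..d}) \<and> v \<in> D ch (\<gamma> t)))" for t
  have AE\<gamma>: "AE t in lebesgue. t \<in> {c..d} \<longrightarrow> goodg t"
    using hor unfolding horizontal_def goodg_def by (rule conjunct2)
  have subsp0: "\<forall>ch\<in>A. \<forall>p\<in>fst ch. subspace (D ch p)"
    using assms(2) unfolding smooth_distribution_def by (rule conjunct1)
  have subsp: "\<And>ch p. ch \<in> A \<Longrightarrow> p \<in> fst ch \<Longrightarrow> subspace (D ch p)"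
    using subsp0 by blast
  define goodm where "goodm s \<longleftrightarrow> (\<forall>ch\<in>A. \<mu> s \<in> fst ch \<longrightarrow>
      (\<exists>v. ((snd ch \<circ> \<mu>) has_vector_derivative v) (at s within {a..b}) \<and> v \<in> D ch (\<mu> s)))" for s
  have AEmu: "AE s in lebesgue. s \<in> {a..b} \<longrightarrow> goodm s"
  proof (cases "a \<le> b")
    case False
    then show ?thesis by simp
  next
    case ab: True
    have cd: "c \<le> d"
    proof (rule ccontr)
      assume "\<not> c \<le> d"
      then have "{c..d} = {}" by simp
      then show False using \<sigma>im ab by auto
    qed
    define F where "F x = \<sigma> (max c (min d x))" for x
    have F\<sigma>: "\<And>t. t \<in> {c..d} \<Longrightarrow> F t = \<sigma> t" by (simp add: F_def)
    have monoF: "mono F"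
    proof (rule monoI)
      fix x y :: real assume "x \<le> y"
      then show "F x \<le> F y" unfolding F_def using cd by (intro mono_onD[OF \<sigma>mono]) auto
    qed
    have cl: "continuous_on UNIV (\<lambda>x::real. max c (min d x))" by (intro continuous_intros)
    have clim: "(\<lambda>x::real. max c (min d x)) ` UNIV \<subseteq> {c..d}" using cd by auto
    have contF: "continuous_on UNIV F"
      unfolding F_def by (rule continuous_on_compose2[OF ac_continuous[OF \<sigma>ac] cl clim])
    obtain N\<gamma> where N\<gamma>: "{t \<in> space lebesgue. \<not> (t \<in> {c..d} \<longrightarrow> goodg t)} \<subseteq> N\<gamma>"
      "emeasure lebesgue N\<gamma> = 0" "N\<gamma> \<in> sets lebesgue"
      using AE_E[OF AE\<gamma>] by blast
    define E\<gamma> where "E\<gamma> = {t \<in> {c..d}. \<not> goodg t}"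
    have nE\<gamma>: "negligible E\<gamma>"
    proof (rule negligible_subset)
      show "negligible N\<gamma>" using N\<gamma>(2,3) by (simp add: negligible_iff_null_sets null_setsI)
      show "E\<gamma> \<subseteq> N\<gamma>" using N\<gamma>(1) unfolding E\<gamma>_def by auto
    qed
    define Nd where "Nd = {t \<in> ball ((c+d)/2) ((d-c)/2). \<not> (\<exists>L. DERIV F t :> L)}"
    have nNd: "negligible Nd" unfolding Nd_def by (rule ae_deriv[OF monoF contF])
    have ball_eq: "ball ((c+d)/2) ((d-c)/2) = {c<..<d}" by (simp add: ball_real_eq field_simps)
    define B where "B = {c,d} \<union> Nd \<union> E\<gamma>"
    have B_sub: "B \<subseteq> {c..d}" using cd ball_eq by (auto simp: B_def Nd_def E\<gamma>_def)
    have ncd: "negligible {c,d}" by (rule negligible_finite) simp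
    have nB: "negligible B" unfolding B_def by (intro negligible_Un ncd nNd nE\<gamma>)
    have "F ` B = \<sigma> ` B" using F\<sigma> B_sub by (intro image_cong) auto
    moreover have "negligible (\<sigma> ` B)" by (rule lusin_N[OF \<sigma>ac \<sigma>mono B_sub nB])
    ultimately have n1: "negligible (F ` B)" by (simp only:)
    define Z where "Z = {t \<in> {c<..<d}. DERIV F t :> 0}"
    have n2: "negligible (F ` Z)" unfolding Z_def by (rule sard_1d[OF monoF \<sigma>ac \<sigma>mono F\<sigma>])
    define N where "N = F ` B \<union> F ` Z"
    have "negligible N" unfolding N_def by (rule negligible_Un[OF n1 n2])
    then have nN: "N \<in> null_sets lebesgue" by (simp only: negligible_iff_null_sets)
    have key: "goodm s" if s: "s \<in> {a..b}" "s \<notin> N" for s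
    proof -
      obtain t where t: "t \<in> {c..d}" "\<sigma> t = s" using \<sigma>im s(1) by (metis imageE)
      have Ft: "F t = s" using F\<sigma> t by simp
      have tB: "t \<notin> B"
      proof
        assume "t \<in> B"
        then have "s \<in> F ` B" using Ft by blast
        then show False using s(2) unfolding N_def by blast
      qed
      then have tcd: "c < t" "t < d" using t unfolding B_def by auto
      have tball: "t \<in> ball ((c+d)/2) ((d-c)/2)" using ball_eq tcd by simp
      obtain L where L: "DERIV F t :> L" using tB tball unfolding B_def Nd_def by blast
      have L0: "L \<noteq> 0"
      proof
        assume "L = 0"
        then have "t \<in> Z" unfolding Z_def using L tcd by simp
        then have "s \<in> F ` Z" using Ft by blast
        then show False using s(2) unfolding N_def by blast
      qed
      have L1: "\<not> L < 0"
      proof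
        assume "L < 0"
        then obtain d0 where d0: "d0 > 0" "\<And>h. h > 0 \<Longrightarrow> h < d0 \<Longrightarrow> F t > F (t + h)"
          using DERIV_neg_dec_right[OF L] by blast
        have "F t > F (t + d0/2)" using d0 by (intro d0(2)) auto
        moreover have "F t \<le> F (t + d0/2)" using monoF d0(1) by (auto simp: mono_def)
        ultimately show False by simp
      qed
      have Lpos: "L > 0" using L0 L1 by simp
      have "goodg t" using tB t unfolding B_def E\<gamma>_def by blast
      then have goodt: "\<forall>ch\<in>A. \<gamma> t \<in> fst ch \<longrightarrow>
          (\<exists>v. ((snd ch \<circ> \<gamma>) has_vector_derivative v) (at t within {c..d}) \<and> v \<in> D ch (\<gamma> t))"
        unfolding goodg_def .
      have \<gamma>t: "\<gamma> t = \<mu> s" using \<gamma>\<sigma> t by simp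
      show ?thesis
        unfolding goodm_def
      proof (intro ballI impI)
        fix ch assume ch: "ch \<in> A" "\<mu> s \<in> fst ch"
        have gch: "\<gamma> t \<in> fst ch" using ch(2) \<gamma>t by (simp only:)
        obtain w where w: "((snd ch \<circ> \<gamma>) has_vector_derivative w) (at t within {c..d})" "w \<in> D ch (\<gamma> t)"
          using goodt ch(1) gch by blast
        have surjF: "\<exists>x\<in>{c..d}. F x = y" if "y \<in> {a..b}" for y
        proof -
          have "y \<in> \<sigma> ` {c..d}" using \<sigma>im that by (simp only:)
          then obtain x where "x \<in> {c..d}" "y = \<sigma> x" by (rule imageE)
          then show ?thesis using F\<sigma> by metis
        qed
        have FabF: "F x \<in> {a..b}" if "x \<in> {c..d}" for x
        proof -
          have "\<sigma> x \<in> \<sigma> ` {c..d}" using that by (rule imageI)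
          then show ?thesis using \<sigma>im F\<sigma>[OF that] by (simp only:)
        qed
        have compF: "(snd ch \<circ> \<mu>) (F x) = (snd ch \<circ> \<gamma>) x" if "x \<in> {c..d}" for x
          using F\<sigma>[OF that] \<gamma>\<sigma> that by simp
        have der: "((snd ch \<circ> \<mu>) has_vector_derivative (1/L) *\<^sub>R w) (at (F t) within {a..b})"
          by (rule reparam_deriv[OF monoF surjF FabF tcd L Lpos w(1) compF])
        have sub: "subspace (D ch (\<mu> s))" by (rule subsp[OF ch])
        have "w \<in> D ch (\<mu> s)" using w(2) \<gamma>t by (simp only:)
        then have mem: "(1/L) *\<^sub>R w \<in> D ch (\<mu> s)" by (rule subspace_mul[OF sub])
        show "\<exists>v. ((snd ch \<circ> \<mu>) has_vector_derivative v) (at s within {a..b}) \<and> v \<in> D ch (\<mu> s)"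
          using der mem unfolding Ft by blast
      qed
    qed
    show ?thesis
      by (rule AE_I'[OF nN]) (use key in blast)
  qed
  show ?thesis unfolding horizontal_def by (rule conjI[OF assms(3) AEmu[unfolded goodm_def]])
qed


end
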